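(* Let $n\in\mathbb N^\star$ be even, $\alpha\in(0,22/35]$, $M$ a probability distribution on $\mathbb N^\star$, $\mu$ a probability distribution on $[-1,1]$ with mean $\theta$, and $\tilde m\in\mathbb N^\star$. Let $\tau=\sqrt{2\log\big(8(\sqrt{\tilde m n\alpha^2}\vee1)\big)/\tilde m}$, $J=\lceil 1/\tau\rceil$, and let $I_1,\dots,I_J$ be the consecutive non-overlapping bins of width $2\tau$ partitioning $[-1,1]$ ($I_j=[-1+2(j-1)\tau,\,-1+2j\tau)\cap[-1,1]$ for $j<J$ and $I_J=[-1+2(J-1)\tau,1]$); set $I_0=I_{J+1}=\emptyset$, and let $l$ be the index with $\theta\in I_l$. For users $u=1,\dots,n/2$, let $(m_u,X^{(u)})$ be i.i.d., with $m_u\sim M$ and, given $m_u=i$, $X^{(u)}=(X^{(u)}_1,\dots,X^{(u)}_i)\sim\mu^{\otimes i}$; let $\bar X^{(u)}=\frac1{m_u}\sum_{t=1}^{m_u}X^{(u)}_t$. For $j\in[J]$ set $V^{(u)}_j=\mathbb 1\{\bar X^{(u)}\in I_{j-1}\cup I_j\cup I_{j+1}\}$ if $m_u\ge\tilde m$, and $V^{(u)}_j=0$ otherwise. Let $\tilde V^{(u)}_j$ equal $V^{(u)}_j$ with probability $e^{\alpha/6}/(1+e^{\alpha/6})$ and $1-V^{(u)}_j$ otherwise, independently over $u,j$ and of the data. Let $\hat j$ be any maximizer over $j\in[J]$ of $\sum_{u=1}^{n/2}\tilde V^{(u)}_j$, and let $\mathcal A=\{|\hat j-l|\le2\}$. Then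 $$\mathbb P(\overline{\mathcal A})\le\frac1\tau\exp\!\Big(-n\alpha^2\,\mathbb P_{m\sim M}(m\ge\tilde m)^2/579\Big).$$
   Context: This is the localisation phase of the paper's distribution-aware mean estimation algorithm; all objects are defined in the claim. $a\vee b=\max(a,b)$; $\overline{\mathcal A}$ is the complement of $\mathcal A$. *)

theory Defs
  imports "HOL-Probability.Probability"
begin

text \<open>Users are indexed by u in {1..n div 2}; the
  sample space carries (i) the sample sizes m_u, (ii) an i.i.d. array of
  samples X(u,t) from mu (only t in {1..m_u} is used), (iii) the
  randomised-response coins B(u,j) for j in {1..J}.\<close>

definition loc_tau :: "nat \<Rightarrow> nat \<Rightarrow> real \<Rightarrow> real" where
  "loc_tau mt n \<alpha> =
     sqrt (2 * ln (8 * max (sqrt (real mt * real n * \<alpha>\<^sup>2)) 1) / real mt)"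

definition loc_J :: "real \<Rightarrow> nat" where
  "loc_J \<tau> = nat \<lceil>1 / \<tau>\<rceil>"

definition bin :: "real \<Rightarrow> nat \<Rightarrow> real set" where
  "bin \<tau> j =
     (if 1 \<le> j \<and> j < loc_J \<tau> then
        {x. -1 + 2 * (real j - 1) * \<tau> \<le> x \<and> x < -1 + 2 * real j * \<tau>} \<inter> {-1..1}
      else if j = loc_J \<tau> then {-1 + 2 * (real j - 1) * \<tau> .. 1}
      else {})"

definition rr_prob :: "real \<Rightarrow> real" where
  "rr_prob \<alpha> = exp (\<alpha> / 6) / (1 + exp (\<alpha> / 6))"

type_synonym loc_omega = "(nat \<Rightarrow> nat) \<times> ((nat \<times> nat) \<Rightarrow> real) \<times> ((nat \<times> nat) \<Rightarrow> bool)"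

definition loc_space ::
  "nat pmf \<Rightarrow> real measure \<Rightarrow> nat \<Rightarrow> nat \<Rightarrow> real \<Rightarrow> loc_omega measure" where
  "loc_space M \<mu> n J p =
     PiM {1..n div 2} (\<lambda>_. measure_pmf M)
     \<Otimes>\<^sub>M (PiM ({1..n div 2} \<times> UNIV) (\<lambda>_. \<mu>)
     \<Otimes>\<^sub>M PiM ({1..n div 2} \<times> {1..J}) (\<lambda>_. measure_pmf (bernoulli_pmf p)))"

definition m_of :: "loc_omega \<Rightarrow> nat \<Rightarrow> nat" where
  "m_of \<omega> u = fst \<omega> u"

definition X_of :: "loc_omega \<Rightarrow> nat \<Rightarrow> nat \<Rightarrow> real" where
  "X_of \<omega> u t = fst (snd \<omega>) (u, t)"

definition B_of :: "loc_omega \<Rightarrow> nat \<Rightarrow> nat \<Rightarrow> bool" where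
  "B_of \<omega> u j = snd (snd \<omega>) (u, j)"

definition Xbar :: "loc_omega \<Rightarrow> nat \<Rightarrow> real" where
  "Xbar \<omega> u = (\<Sum>t = 1..m_of \<omega> u. X_of \<omega> u t) / real (m_of \<omega> u)"

definition V :: "real \<Rightarrow> nat \<Rightarrow> loc_omega \<Rightarrow> nat \<Rightarrow> nat \<Rightarrow> real" where
  "V \<tau> mt \<omega> u j =
     (if m_of \<omega> u \<ge> mt
      then indicator (bin \<tau> (j - 1) \<union> bin \<tau> j \<union> bin \<tau> (j + 1)) (Xbar \<omega> u)
      else 0)"

definition Vt :: "real \<Rightarrow> nat \<Rightarrow> loc_omega \<Rightarrow> nat \<Rightarrow> nat \<Rightarrow> real" where
  "Vt \<tau> mt \<omega> u j = (if B_of \<omega> u j then V \<tau> mt \<omega> u j else 1 - V \<tau> mt \<omega> u j)"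

definition score :: "real \<Rightarrow> nat \<Rightarrow> nat \<Rightarrow> loc_omega \<Rightarrow> nat \<Rightarrow> real" where
  "score \<tau> mt n \<omega> j = (\<Sum>u = 1..n div 2. Vt \<tau> mt \<omega> u j)"

end

theory Submission
  imports Defs
begin

lemma J_props:
  assumes "\<tau> > 0"
  shows "1 \<le> loc_J \<tau>" "real (loc_J \<tau>) < 1 / \<tau> + 1" "1 / \<tau> \<le> real (loc_J \<tau>)"
proof -
  have p: "1 / \<tau> > 0" using assms by simp
  have c: "real_of_int \<lceil>1 / \<tau>\<rceil> < 1 / \<tau> + 1" "1 / \<tau> \<le> real_of_int \<lceil>1 / \<tau>\<rceil>"
    by linarith+
  have "\<lceil>1 / \<tau>\<rceil> \<ge> 1" using p by (simp add: one_le_ceiling) 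
  then have e: "real (loc_J \<tau>) = real_of_int \<lceil>1 / \<tau>\<rceil>" by (simp add: loc_J_def)
  show "1 \<le> loc_J \<tau>" using nat_mono[OF \<open>\<lceil>1 / \<tau>\<rceil> \<ge> 1\<close>] unfolding loc_J_def by simp
  show "real (loc_J \<tau>) < 1 / \<tau> + 1" "1 / \<tau> \<le> real (loc_J \<tau>)" using c e by simp_all
qed

lemma bin_mem:
  assumes "x \<in> bin \<tau> k" and tau: "\<tau> > 0"
  shows "1 \<le> k" "k \<le> loc_J \<tau>" "-1 + 2 * (real k - 1) * \<tau> \<le> x" "k < loc_J \<tau> \<Longrightarrow> x < -1 + 2 * real k * \<tau>"
    "x \<le> 1"
  using assms J_props(1)[OF tau] by (auto simp: bin_def split: if_splits)

lemma bin_good: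
  assumes tau: "\<tau> > 0" and l: "1 \<le> l" "l \<le> loc_J \<tau>" and th: "\<theta> \<in> bin \<tau> l"
    and x: "-1 \<le> x" "x \<le> 1" "\<bar>x - \<theta>\<bar> < 2 * \<tau>"
  shows "x \<in> bin \<tau> (l - 1) \<union> bin \<tau> l \<union> bin \<tau> (l + 1)"
proof -
  define L where "L = -1 + 2 * (real l - 1) * \<tau>"
  have thL: "L \<le> \<theta>" using bin_mem(3)[OF th tau] by (simp add: L_def)
  have thU: "l < loc_J \<tau> \<Longrightarrow> \<theta> < L + 2 * \<tau>" using bin_mem(4)[OF th tau] by (simp add: L_def algebra_simps)
  show ?thesis
  proof (cases "x < L")
    case True
    have "l \<noteq> 1" using True x(1) by (auto simp: L_def)
    then have l2: "l \<ge> 2" using l by simp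
    have r: "real (l - 1) = real l - 1" using l2 by simp
    have "x \<in> bin \<tau> (l - 1)"
      using l2 l True x thL unfolding bin_def r L_def by (auto simp: algebra_simps)
    then show ?thesis by simp
  next
    case False
    show ?thesis
    proof (cases "l = loc_J \<tau>")
      case True
      then have "x \<in> bin \<tau> l" using False x l unfolding bin_def L_def by auto
      then show ?thesis by simp
    next
      case lJ: False
      then have lJ': "l < loc_J \<tau>" using l by simp
      show ?thesis
      proof (cases "x < L + 2 * \<tau>")
        case True
        then have "x \<in> bin \<tau> l" using False x l lJ' unfolding bin_def L_def by (auto simp: algebra_simps)
        then show ?thesis by simp
      next
        case F2: False
        have "x < L + 4 * \<tau>" using thU[OF lJ'] x by linarith
        then have "x \<in> bin \<tau> (l + 1)" using F2 x l lJ' unfolding bin_def L_def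
          by (auto simp: algebra_simps)
        then show ?thesis by simp
      qed
    qed
  qed
qed

lemma bin_far:
  assumes tau: "\<tau> > 0" and l: "1 \<le> l" "l \<le> loc_J \<tau>" and th: "\<theta> \<in> bin \<tau> l"
    and jl: "\<bar>int j - int l\<bar> > 2"
    and x: "x \<in> bin \<tau> (j - 1) \<union> bin \<tau> j \<union> bin \<tau> (j + 1)"
  shows "\<bar>x - \<theta>\<bar> \<ge> 2 * \<tau>"
proof -
  obtain k where k: "x \<in> bin \<tau> k" "k = j - 1 \<or> k = j \<or> k = j + 1" using x by blast
  note km = bin_mem[OF k(1) tau]
  note tm = bin_mem[OF th tau]
  show ?thesis
  proof (cases "j > l")
    case True
    then have kl: "k \<ge> l + 2" using jl k(2) by auto
    then have "l < loc_J \<tau>" using km(2) by simp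
    then have t1: "\<theta> < -1 + 2 * real l * \<tau>" by (rule tm(4))
    have "real l + 1 \<le> real k - 1" using kl by simp
    then have "(real l + 1) * \<tau> \<le> (real k - 1) * \<tau>" using tau by (intro mult_right_mono) auto
    then show ?thesis using km(3) t1 by (simp add: algebra_simps)
  next
    case False
    then have kl: "k + 2 \<le> l" using jl k(2) by auto
    then have "k < loc_J \<tau>" using l by simp
    then have t1: "x < -1 + 2 * real k * \<tau>" by (rule km(4))
    have "real k \<le> real l - 2" using kl by simp
    then have "real k * \<tau> \<le> (real l - 2) * \<tau>" using tau by (intro mult_right_mono) auto
    then show ?thesis using tm(3) t1 by (simp add: algebra_simps)
  qed
qed

lemma tau_facts:
  assumes mt: "mt \<ge> 1"
  shows "loc_tau mt n \<alpha> > 0" "exp (- 2 * real mt * (loc_tau mt n \<alpha>)\<^sup>2) \<le> 1 / 4096"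
proof -
  define y where "y = 8 * max (sqrt (real mt * real n * \<alpha>\<^sup>2)) 1"
  have y8: "y \<ge> 8" by (simp add: y_def)
  have lny: "ln y > 0" using y8 by simp
  have sq: "(loc_tau mt n \<alpha>)\<^sup>2 = 2 * ln y / real mt"
    using lny mt unfolding loc_tau_def y_def[symmetric] by simp
  show "loc_tau mt n \<alpha> > 0" using lny mt unfolding loc_tau_def y_def[symmetric] by simp
  have e: "2 * real mt * (loc_tau mt n \<alpha>)\<^sup>2 = real (4::nat) * ln y" using mt by (simp add: sq)
  have "exp (2 * real mt * (loc_tau mt n \<alpha>)\<^sup>2) = y ^ 4"
    unfolding e exp_of_nat_mult using y8 by simp
  then have "exp (- 2 * real mt * (loc_tau mt n \<alpha>)\<^sup>2) = inverse (y ^ 4)"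
    by (simp add: exp_minus)
  also have "\<dots> \<le> inverse (8 ^ 4)"
    using y8 by (intro le_imp_inverse_le power_mono) auto
  finally show "exp (- 2 * real mt * (loc_tau mt n \<alpha>)\<^sup>2) \<le> 1 / 4096" by simp
qed

lemma poly_aux:
  fixes x :: real
  assumes "0 < x" "x \<le> 11 / 105"
  shows "(1 + x / 2 + x\<^sup>2 / 8)\<^sup>2 * (2003 - 1000 * x) - 2003 - 1000 * x \<ge> 0"
proof -
  have "x ^ 2 \<le> (11/105) ^ 2" using assms by (intro power_mono) auto
  then have x2: "x ^ 2 \<le> 121/11025" by (simp add: power_divide)
  have "x ^ 3 \<le> (11/105) ^ 3" using assms by (intro power_mono) auto
  then have x3: "x ^ 3 \<le> 1331/1157625" by (simp add: power_divide)
  have "x ^ 4 \<le> (11/105) ^ 4" using assms by (intro power_mono) auto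
  then have x4: "x ^ 4 \<le> 14641/121550625" by (simp add: power_divide)
  have g: "3 + 3/2 * x - 1997/8 * x ^ 2 - 5997/64 * x ^ 3 - 125/8 * x ^ 4 \<ge> 0"
    using x2 x3 x4 assms by linarith
  have "(1 + x / 2 + x\<^sup>2 / 8)\<^sup>2 * (2003 - 1000 * x) - 2003 - 1000 * x
      = x * (3 + 3/2 * x - 1997/8 * x ^ 2 - 5997/64 * x ^ 3 - 125/8 * x ^ 4)"
    by (simp add: power2_eq_square power3_eq_cube power4_eq_xxxx algebra_simps)
  also have "\<dots> \<ge> 0" using g assms by simp
  finally show ?thesis .
qed

lemma rr_facts:
  assumes a: "0 < \<alpha>" "\<alpha> \<le> 22 / 35"
  shows "1 / 2 < rr_prob \<alpha>" "rr_prob \<alpha> < 1"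
    "2 * rr_prob \<alpha> - 1 \<ge> 1000 * \<alpha> / 12018"
proof -
  define x where "x = \<alpha> / 6"
  define E where "E = exp x"
  have x: "0 < x" "x \<le> 11 / 105" using a by (auto simp: x_def)
  have E1: "E > 1" using x by (simp add: E_def)
  have q: "rr_prob \<alpha> = E / (1 + E)" by (simp add: rr_prob_def E_def x_def)
  show "1 / 2 < rr_prob \<alpha>" "rr_prob \<alpha> < 1" using E1 by (simp_all add: q field_simps)
  have h: "1 + x / 2 + (x / 2)\<^sup>2 / 2 \<le> exp (x / 2)" using x by (intro exp_lower_Taylor_quadratic) simp
  have "(1 + x / 2 + x\<^sup>2 / 8)\<^sup>2 \<le> (exp (x / 2))\<^sup>2"
    using h x by (intro power_mono) (auto simp: power2_eq_square)
  also have "(exp (x / 2))\<^sup>2 = E" by (simp add: E_def power2_eq_square flip: exp_add)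
  finally have Eb: "(1 + x / 2 + x\<^sup>2 / 8)\<^sup>2 \<le> E" .
  have "(1 + x / 2 + x\<^sup>2 / 8)\<^sup>2 * (2003 - 1000 * x) \<le> E * (2003 - 1000 * x)"
    using Eb x by (intro mult_right_mono) auto
  then have key: "2003 * (E - 1) \<ge> 1000 * x * (E + 1)" using poly_aux[OF x] by (simp add: algebra_simps)
  have "2 * rr_prob \<alpha> - 1 = (E - 1) / (E + 1)" using E1 by (simp add: q field_simps)
  also have "\<dots> \<ge> 1000 * x / 2003" using key E1 by (simp add: field_simps)
  finally show "2 * rr_prob \<alpha> - 1 \<ge> 1000 * \<alpha> / 12018" by (simp add: x_def)
qed

lemma indep_vars_PiM_coords:
  assumes M: "\<And>i. i \<in> K \<Longrightarrow> prob_space (M i)" and f: "inj_on f I" "f \<in> I \<rightarrow> K"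
  shows "prob_space.indep_vars (PiM K M) (\<lambda>i. M (f i)) (\<lambda>i \<omega>. \<omega> (f i)) I"
proof -
  interpret P: prob_space "PiM K M" using M by (rule prob_space_PiM)
  show ?thesis
  proof (cases "I = {}")
    case True
    then show ?thesis by (simp add: P.indep_vars_def2 P.indep_sets_def)
  next
    case False
    have rv: "\<And>i. i \<in> I \<Longrightarrow> (\<lambda>\<omega>. \<omega> (f i)) \<in> measurable (PiM K M) (M (f i))"
      using f by (intro measurable_component_singleton) auto
    show ?thesis
    proof (subst P.indep_vars_iff_distr_eq_PiM'[OF False rv], assumption)
      have "distr (PiM K M) (\<Pi>\<^sub>M i\<in>I. M (f i)) (\<lambda>x. \<lambda>i\<in>I. x (f i)) = (\<Pi>\<^sub>M i\<in>I. M (f i))"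
        by (rule distr_PiM_reindex[OF M f])
      also have "\<dots> = (\<Pi>\<^sub>M i\<in>I. distr (PiM K M) (M (f i)) (\<lambda>\<omega>. \<omega> (f i)))"
        by (intro PiM_cong refl distr_PiM_component[symmetric] M) (use f in auto)
      finally show "distr (PiM K M) (\<Pi>\<^sub>M i\<in>I. M (f i)) (\<lambda>x. \<lambda>i\<in>I. x (f i)) = (\<Pi>\<^sub>M i\<in>I. distr (PiM K M) (M (f i)) (\<lambda>\<omega>. \<omega> (f i)))" .
    qed
  qed
qed

lemma measure_pair_Times:
  assumes "prob_space M1" "prob_space M2" "A \<in> sets M1" "B \<in> sets M2"
  shows "measure (M1 \<Otimes>\<^sub>M M2) (A \<times> B) = measure M1 A * measure M2 B"
proof -
  interpret M2: prob_space M2 by fact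
  show ?thesis using assms
    by (simp add: measure_def M2.emeasure_pair_measure_Times enn2real_mult)
qed

lemma indep_vars_pair:
  assumes P1: "prob_space M1" and P2: "prob_space M2" and fin: "finite I"
    and X: "prob_space.indep_vars M1 N1 X I" and Y: "prob_space.indep_vars M2 N2 Y I"
  shows "prob_space.indep_vars (M1 \<Otimes>\<^sub>M M2) (\<lambda>i. N1 i \<Otimes>\<^sub>M N2 i)
           (\<lambda>i \<omega>. (X i (fst \<omega>), Y i (snd \<omega>))) I"
proof -
  interpret M1: prob_space M1 by fact
  interpret M2: prob_space M2 by fact
  interpret P: pair_prob_space M1 M2 ..
  have Xm: "\<And>i. i \<in> I \<Longrightarrow> X i \<in> measurable M1 (N1 i)" using X by (auto simp: M1.indep_vars_def)
  have Ym: "\<And>i. i \<in> I \<Longrightarrow> Y i \<in> measurable M2 (N2 i)" using Y by (auto simp: M2.indep_vars_def)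
  show ?thesis
  proof (cases "I = {}")
    case True
    then show ?thesis by (simp add: P.indep_vars_def2 P.indep_sets_def)
  next
    case False
    let ?E = "\<lambda>i. {a \<times> b | a b. a \<in> sets (N1 i) \<and> b \<in> sets (N2 i)}"
    let ?Z = "\<lambda>i \<omega>. (X i (fst \<omega>), Y i (snd \<omega>))"
    show ?thesis
    proof (subst P.indep_vars_finite[where E="?E"])
      show "I \<noteq> {}" "finite I" by fact+
      show "sets (N1 i \<Otimes>\<^sub>M N2 i) = sigma_sets (space (N1 i \<Otimes>\<^sub>M N2 i)) (?E i)" for i
        by (simp add: sets_pair_measure space_pair_measure)
      show "?Z i \<in> measurable (M1 \<Otimes>\<^sub>M M2) (N1 i \<Otimes>\<^sub>M N2 i)" if "i \<in> I" for i
        by (intro measurable_Pair measurable_compose[OF measurable_fst] measurable_compose[OF measurable_snd] Xm Ym that)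
      show "Int_stable (?E i)" for i by (rule Int_stable_pair_measure_generator)
      show "space (N1 i \<Otimes>\<^sub>M N2 i) \<in> ?E i" for i
        by (auto simp: space_pair_measure)
      show "?E i \<subseteq> Pow (space (N1 i \<Otimes>\<^sub>M N2 i))" for i
        by (auto simp: space_pair_measure dest: sets.sets_into_space)
      show "\<forall>A\<in>Pi I ?E. P.prob (\<Inter>j\<in>I. ?Z j -` A j \<inter> space (M1 \<Otimes>\<^sub>M M2)) =
          (\<Prod>j\<in>I. P.prob (?Z j -` A j \<inter> space (M1 \<Otimes>\<^sub>M M2)))"
      proof
        fix A assume A: "A \<in> Pi I ?E"
        then have "\<forall>j\<in>I. \<exists>ab. A j = fst ab \<times> snd ab \<and> fst ab \<in> sets (N1 j) \<and> snd ab \<in> sets (N2 j)"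
          by (auto simp: Pi_iff)
        then obtain ab where ab: "\<And>j. j \<in> I \<Longrightarrow> A j = fst (ab j) \<times> snd (ab j) \<and>
            fst (ab j) \<in> sets (N1 j) \<and> snd (ab j) \<in> sets (N2 j)"
          by metis
        define a where "a j = fst (ab j)" for j
        define b where "b j = snd (ab j)" for j
        have Aj: "\<And>j. j \<in> I \<Longrightarrow> A j = a j \<times> b j" and a: "\<And>j. j \<in> I \<Longrightarrow> a j \<in> sets (N1 j)"
          and b: "\<And>j. j \<in> I \<Longrightarrow> b j \<in> sets (N2 j)"
          using ab by (auto simp: a_def b_def)
        have pre: "?Z j -` A j \<inter> space (M1 \<Otimes>\<^sub>M M2) = (X j -` a j \<inter> space M1) \<times> (Y j -` b j \<inter> space M2)"
          if "j \<in> I" for j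
          using Aj[OF that] by (auto simp: space_pair_measure)
        have "(\<Inter>j\<in>I. ?Z j -` A j \<inter> space (M1 \<Otimes>\<^sub>M M2)) =
              (\<Inter>j\<in>I. X j -` a j \<inter> space M1) \<times> (\<Inter>j\<in>I. Y j -` b j \<inter> space M2)"
          using False pre by auto
        then have "P.prob (\<Inter>j\<in>I. ?Z j -` A j \<inter> space (M1 \<Otimes>\<^sub>M M2)) =
             M1.prob (\<Inter>j\<in>I. X j -` a j \<inter> space M1) * M2.prob (\<Inter>j\<in>I. Y j -` b j \<inter> space M2)"
        proof -
          have S1: "(\<Inter>j\<in>I. X j -` a j \<inter> space M1) \<in> sets M1"
            using fin False a Xm by (intro sets.finite_INT) (auto intro: measurable_sets)
          have S2: "(\<Inter>j\<in>I. Y j -` b j \<inter> space M2) \<in> sets M2"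
            using fin False b Ym by (intro sets.finite_INT) (auto intro: measurable_sets)
          show ?thesis using measure_pair_Times[OF P1 P2 S1 S2] by (simp only: \<open>(\<Inter>j\<in>I. ?Z j -` A j \<inter> space (M1 \<Otimes>\<^sub>M M2)) = _\<close>)
        qed
        also have "\<dots> = (\<Prod>j\<in>I. M1.prob (X j -` a j \<inter> space M1)) * (\<Prod>j\<in>I. M2.prob (Y j -` b j \<inter> space M2))"
          using M1.indep_varsD_finite[OF X False fin a] M2.indep_varsD_finite[OF Y False fin b] by simp
        also have "\<dots> = (\<Prod>j\<in>I. P.prob (?Z j -` A j \<inter> space (M1 \<Otimes>\<^sub>M M2)))"
          unfolding prod.distrib[symmetric]
        proof (rule prod.cong[OF refl])
          fix j assume j: "j \<in> I"
          have S1: "X j -` a j \<inter> space M1 \<in> sets M1" using Xm[OF j] a[OF j] by (rule measurable_sets)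
          have S2: "Y j -` b j \<inter> space M2 \<in> sets M2" using Ym[OF j] b[OF j] by (rule measurable_sets)
          show "M1.prob (X j -` a j \<inter> space M1) * M2.prob (Y j -` b j \<inter> space M2) =
                P.prob (?Z j -` A j \<inter> space (M1 \<Otimes>\<^sub>M M2))"
            using measure_pair_Times[OF P1 P2 S1 S2] by (simp only: pre[OF j])
        qed
        finally show "P.prob (\<Inter>j\<in>I. ?Z j -` A j \<inter> space (M1 \<Otimes>\<^sub>M M2)) =
          (\<Prod>j\<in>I. P.prob (?Z j -` A j \<inter> space (M1 \<Otimes>\<^sub>M M2)))" .
      qed
    qed
  qed
qed



definition xb :: "nat \<Rightarrow> nat \<Rightarrow> (nat \<times> nat \<Rightarrow> real) \<Rightarrow> real" where
  "xb u i rb = (\<Sum>t = 1..i. rb (u, t)) / real i"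

lemma row_facts:
  fixes \<mu> :: "real measure" and K :: "(nat \<times> nat) set" and u :: nat
  assumes mu_prob: "prob_space \<mu>" and mu_sets: "sets \<mu> = sets borel"
    and mu_supp: "measure \<mu> {-1..1} = 1" and K: "\<And>t. (u, t) \<in> K"
  shows "AE rb in PiM K (\<lambda>_. \<mu>). \<forall>t. rb (u, t) \<in> {-1..1}"
    and "\<And>t. (\<lambda>rb. rb (u, t)) \<in> borel_measurable (PiM K (\<lambda>_. \<mu>))"
    and "\<And>t. (\<integral>rb. rb (u, t) \<partial>PiM K (\<lambda>_. \<mu>)) = (\<integral>x. x \<partial>\<mu>)"
    and "prob_space.indep_vars (PiM K (\<lambda>_. \<mu>)) (\<lambda>_. borel) (\<lambda>t rb. rb (u, t)) I"
proof -
  interpret mu: prob_space \<mu> by fact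
  have ae1: "AE x in \<mu>. x \<in> {-1..1}" using mu_supp by (intro mu.AE_prob_1)
  have "AE rb in PiM K (\<lambda>_. \<mu>). rb (u, t) \<in> {-1..1}" for t
    by (rule AE_PiM_component[OF _ K ae1]) (rule mu_prob)
  then have "\<forall>t. AE rb in PiM K (\<lambda>_. \<mu>). rb (u, t) \<in> {-1..1}" by blast
  then show "AE rb in PiM K (\<lambda>_. \<mu>). \<forall>t. rb (u, t) \<in> {-1..1}"
    by (rule AE_all_countable[THEN iffD2])
  have idm: "(\<lambda>x. x) \<in> measurable \<mu> borel" by (rule measurable_ident_sets[OF mu_sets])
  show meas: "(\<lambda>rb. rb (u, t)) \<in> borel_measurable (PiM K (\<lambda>_. \<mu>))" for t
    using measurable_compose[OF measurable_component_singleton[OF K] idm] by simp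
  show "(\<integral>rb. rb (u, t) \<partial>PiM K (\<lambda>_. \<mu>)) = (\<integral>x. x \<partial>\<mu>)" for t
  proof -
    have "(\<integral>x. x \<partial>\<mu>) = (\<integral>x. x \<partial>distr (PiM K (\<lambda>_. \<mu>)) \<mu> (\<lambda>rb. rb (u, t)))"
      by (subst distr_PiM_component[OF mu_prob K]) simp
    also have "\<dots> = (\<integral>rb. rb (u, t) \<partial>PiM K (\<lambda>_. \<mu>))"
      by (rule integral_distr[OF measurable_component_singleton[OF K] idm])
    finally show ?thesis by simp
  qed
  have "prob_space.indep_vars (PiM K (\<lambda>_. \<mu>)) (\<lambda>t. \<mu>) (\<lambda>t rb. rb ((\<lambda>t. (u, t)) t)) I"
    by (rule indep_vars_PiM_coords) (auto intro: mu_prob K inj_onI)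
  then show "prob_space.indep_vars (PiM K (\<lambda>_. \<mu>)) (\<lambda>_. borel) (\<lambda>t rb. rb (u, t)) I"
  proof -
    assume a: "prob_space.indep_vars (PiM K (\<lambda>_. \<mu>)) (\<lambda>t. \<mu>) (\<lambda>t rb. rb ((\<lambda>t. (u, t)) t)) I"
    have "prob_space.indep_vars (PiM K (\<lambda>_. \<mu>)) (\<lambda>_. borel) (\<lambda>t rb. (\<lambda>x. x) (rb ((\<lambda>t. (u, t)) t))) I"
      by (rule prob_space.indep_vars_compose2[OF prob_space_PiM[OF mu_prob] a]) (rule idm)
    then show ?thesis by simp
  qed
qed

lemma row_hoeffding:
  fixes \<mu> :: "real measure" and K :: "(nat \<times> nat) set" and u :: nat
  assumes mu_prob: "prob_space \<mu>" and mu_sets: "sets \<mu> = sets borel"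
    and mu_supp: "measure \<mu> {-1..1} = 1" and K: "\<And>t. (u, t) \<in> K"
    and i: "i \<ge> 1" and c: "c \<ge> 0"
  shows "measure (PiM K (\<lambda>_. \<mu>)) {rb \<in> space (PiM K (\<lambda>_. \<mu>)). \<bar>xb u i rb - (\<integral>x. x \<partial>\<mu>)\<bar> \<ge> c}
           \<le> 2 * exp (- real i * c\<^sup>2 / 2)"
proof -
  let ?B = "PiM K (\<lambda>_. \<mu>)"
  let ?\<theta> = "\<integral>x. x \<partial>\<mu>"
  note rf = row_facts[OF mu_prob mu_sets mu_supp K]
  interpret B: prob_space ?B by (rule prob_space_PiM[OF mu_prob])
  interpret H: Hoeffding_ineq ?B "{1..i}" "\<lambda>t rb. rb (u, t)" "\<lambda>_. -1" "\<lambda>_. 1"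
      "\<Sum>t\<in>{1..i}. B.expectation (\<lambda>rb. rb (u, t))"
  proof unfold_locales
    show "finite {1..i}" by simp
    show "B.indep_vars (\<lambda>_. borel) (\<lambda>t rb. rb (u, t)) {1..i}" by (rule rf(4))
    show "AE x in ?B. x (u, t) \<in> {-1..1}" for t using rf(1) by eventually_elim auto
  qed simp
  have mu: "(\<Sum>t\<in>{1..i}. B.expectation (\<lambda>rb. rb (u, t))) = real i * ?\<theta>"
    by (simp add: rf(3))
  have pos: "(\<Sum>t\<in>{1..i}. ((1::real) - -1)\<^sup>2) > 0" using i by simp
  have "B.prob {x \<in> space ?B. \<bar>(\<Sum>t\<in>{1..i}. x (u, t)) - real i * ?\<theta>\<bar> \<ge> real i * c}
        \<le> 2 * exp (- 2 * (real i * c)\<^sup>2 / (\<Sum>t\<in>{1..i}. ((1::real) - -1)\<^sup>2))"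
    using H.Hoeffding_ineq_abs_ge[OF _ pos, of "real i * c"] c unfolding mu by simp
  also have "- 2 * (real i * c)\<^sup>2 / (\<Sum>t\<in>{1..i}. ((1::real) - -1)\<^sup>2) = - real i * c\<^sup>2 / 2"
    using i by (simp add: power2_eq_square field_simps)
  also have "{x \<in> space ?B. \<bar>(\<Sum>t\<in>{1..i}. x (u, t)) - real i * ?\<theta>\<bar> \<ge> real i * c}
      = {rb \<in> space ?B. \<bar>xb u i rb - ?\<theta>\<bar> \<ge> c}"
  proof -
    have "\<bar>(\<Sum>t\<in>{1..i}. x (u, t)) - real i * ?\<theta>\<bar> \<ge> real i * c \<longleftrightarrow> \<bar>xb u i x - ?\<theta>\<bar> \<ge> c" for x
    proof -
      have "xb u i x - ?\<theta> = ((\<Sum>t\<in>{1..i}. x (u, t)) - real i * ?\<theta>) / real i"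
        using i by (simp add: xb_def field_simps)
      then have "(\<Sum>t\<in>{1..i}. x (u, t)) - real i * ?\<theta> = real i * (xb u i x - ?\<theta>)"
        using i by (simp add: field_simps)
      then have e: "\<bar>(\<Sum>t\<in>{1..i}. x (u, t)) - real i * ?\<theta>\<bar> = real i * \<bar>xb u i x - ?\<theta>\<bar>"
        by (simp add: abs_mult)
      have ip: "real i > 0" using i by simp
      show ?thesis unfolding e using ip by (simp add: mult_le_cancel_left_pos)
    qed
    then show ?thesis by simp
  qed
  finally show ?thesis .
qed

definition Vr :: "real \<Rightarrow> nat \<Rightarrow> nat \<Rightarrow> nat \<Rightarrow> nat \<Rightarrow> (nat \<times> nat \<Rightarrow> real) \<Rightarrow> real" where
  "Vr \<tau> mt u j i rb = (if mt \<le> i then indicator (bin \<tau> (j - 1) \<union> bin \<tau> j \<union> bin \<tau> (j + 1)) (xb u i rb) else 0)"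

definition Vtr :: "real \<Rightarrow> nat \<Rightarrow> nat \<Rightarrow> nat \<Rightarrow> nat \<Rightarrow> (nat \<times> nat \<Rightarrow> real) \<Rightarrow> (nat \<times> nat \<Rightarrow> bool) \<Rightarrow> real" where
  "Vtr \<tau> mt u j i rb rc = (if rc (u, j) then Vr \<tau> mt u j i rb else 1 - Vr \<tau> mt u j i rb)"

lemma V_eq: "V \<tau> mt \<omega> u j = Vr \<tau> mt u j (fst \<omega> u) (fst (snd \<omega>))"
  by (simp add: V_def Vr_def Xbar_def xb_def m_of_def X_of_def)

lemma Vt_eq: "Vt \<tau> mt \<omega> u j = Vtr \<tau> mt u j (fst \<omega> u) (fst (snd \<omega>)) (snd (snd \<omega>))"
  by (simp add: Vt_def Vtr_def V_eq B_of_def)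

lemma Vr_01: "Vr \<tau> mt u j i rb \<in> {0, 1}"
  by (simp add: Vr_def indicator_def)

lemma Vtr_bounds: "0 \<le> Vtr \<tau> mt u j i rb rc" "Vtr \<tau> mt u j i rb rc \<le> 1"
  using Vr_01[of \<tau> mt u j i rb] by (auto simp: Vtr_def)

lemma bin_borel: "bin \<tau> k \<in> sets borel"
  unfolding bin_def by auto

lemma xb_meas:
  fixes \<mu> :: "real measure" and K :: "(nat \<times> nat) set" and u :: nat
  assumes mu_sets: "sets \<mu> = sets borel" and K: "\<And>t. (u, t) \<in> K"
  shows "(\<lambda>rb. xb u i rb) \<in> borel_measurable (PiM K (\<lambda>_. \<mu>))"
proof -
  have idm: "(\<lambda>x. x) \<in> measurable \<mu> borel" by (rule measurable_ident_sets[OF mu_sets])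
  have c: "(\<lambda>rb. rb (u, t)) \<in> borel_measurable (PiM K (\<lambda>_. \<mu>))" for t
    using measurable_compose[OF measurable_component_singleton[OF K] idm] by simp
  show ?thesis unfolding xb_def by (intro borel_measurable_divide borel_measurable_sum c) simp
qed

lemma Vr_meas:
  fixes \<mu> :: "real measure" and K :: "(nat \<times> nat) set" and u :: nat
  assumes mu_sets: "sets \<mu> = sets borel" and K: "\<And>t. (u, t) \<in> K"
  shows "(\<lambda>rb. Vr \<tau> mt u j i rb) \<in> borel_measurable (PiM K (\<lambda>_. \<mu>))"
proof -
  have S: "bin \<tau> (j - 1) \<union> bin \<tau> j \<union> bin \<tau> (j + 1) \<in> sets borel" using bin_borel by auto
  have m: "(\<lambda>rb. indicator (bin \<tau> (j - 1) \<union> bin \<tau> j \<union> bin \<tau> (j + 1)) (xb u i rb) :: real)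
     \<in> borel_measurable (PiM K (\<lambda>_. \<mu>))"
    using measurable_compose[OF xb_meas[OF mu_sets K] borel_measurable_indicator[OF S]] by (simp add: comp_def)
  show ?thesis
  proof (cases "mt \<le> i")
    case True
    then have "(\<lambda>rb. Vr \<tau> mt u j i rb) = (\<lambda>rb. indicator (bin \<tau> (j - 1) \<union> bin \<tau> j \<union> bin \<tau> (j + 1)) (xb u i rb))"
      by (simp add: Vr_def)
    then show ?thesis using m by (simp only:)
  next
    case False
    then show ?thesis by (simp add: Vr_def)
  qed
qed

lemma xb_range:
  assumes "\<forall>t. rb (u, t) \<in> {-1..1}" "i \<ge> 1"
  shows "-1 \<le> xb u i rb" "xb u i rb \<le> 1"
proof -
  have "(\<Sum>t = 1..i. rb (u, t)) \<le> (\<Sum>t = 1..i. 1)" using assms(1) by (intro sum_mono) auto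
  moreover have "(\<Sum>t = 1..i. -1) \<le> (\<Sum>t = 1..i. rb (u, t))" using assms(1) by (intro sum_mono) auto
  ultimately have "(\<Sum>t = 1..i. rb (u, t)) \<le> real i" "- real i \<le> (\<Sum>t = 1..i. rb (u, t))" by simp_all
  then show "-1 \<le> xb u i rb" "xb u i rb \<le> 1" using assms(2) by (simp_all add: xb_def field_simps)
qed

lemma Vr_bound:
  fixes \<mu> :: "real measure" and K :: "(nat \<times> nat) set" and u :: nat
  assumes mu_prob: "prob_space \<mu>" and mu_sets: "sets \<mu> = sets borel"
    and mu_supp: "measure \<mu> {-1..1} = 1" and K: "\<And>t. (u, t) \<in> K"
    and tau: "\<tau> > 0" and l: "1 \<le> l" "l \<le> loc_J \<tau>" and th: "(\<integral>x. x \<partial>\<mu>) \<in> bin \<tau> l"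
    and jl: "\<bar>int j - int l\<bar> > 2" and mt: "mt \<ge> 1"
  shows "(\<integral>rb. Vr \<tau> mt u j i rb - Vr \<tau> mt u l i rb \<partial>PiM K (\<lambda>_. \<mu>))
           \<le> - (if mt \<le> i then 1 - 4 * exp (- 2 * real i * \<tau>\<^sup>2) else 0)"
proof (cases "mt \<le> i")
  case False
  then show ?thesis by (simp add: Vr_def)
next
  case True
  then have i: "i \<ge> 1" using mt by simp
  let ?B = "PiM K (\<lambda>_. \<mu>)"
  let ?\<theta> = "\<integral>x. x \<partial>\<mu>"
  interpret B: prob_space ?B by (rule prob_space_PiM[OF mu_prob])
  define S where "S = {rb \<in> space ?B. \<bar>xb u i rb - ?\<theta>\<bar> \<ge> 2 * \<tau>}"
  have xm: "(\<lambda>rb. xb u i rb) \<in> borel_measurable ?B" by (rule xb_meas[OF mu_sets K])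
  have Sm: "S \<in> sets ?B" unfolding S_def using xm by measurable
  have vm: "(\<lambda>rb. Vr \<tau> mt u k i rb) \<in> borel_measurable ?B" for k by (rule Vr_meas[OF mu_sets K])
  have AEb: "AE rb in ?B. Vr \<tau> mt u j i rb - Vr \<tau> mt u l i rb \<le> -1 + 2 * indicator S rb"
    using row_facts(1)[OF mu_prob mu_sets mu_supp K] AE_space
  proof eventually_elim
    case (elim rb)
    note xr = xb_range[OF elim(1) i]
    show ?case
    proof (cases "rb \<in> S")
      case True
      then show ?thesis using Vr_01[of \<tau> mt u j i rb] Vr_01[of \<tau> mt u l i rb] by auto
    next
      case False
      then have c: "\<bar>xb u i rb - ?\<theta>\<bar> < 2 * \<tau>" using elim(2) by (auto simp: S_def)
      have "xb u i rb \<in> bin \<tau> (l - 1) \<union> bin \<tau> l \<union> bin \<tau> (l + 1)"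
        by (rule bin_good[OF tau l th xr c])
      then have vl: "Vr \<tau> mt u l i rb = 1" using True by (simp add: Vr_def)
      have "xb u i rb \<notin> bin \<tau> (j - 1) \<union> bin \<tau> j \<union> bin \<tau> (j + 1)"
        using bin_far[OF tau l th jl] c by force
      then have vj: "Vr \<tau> mt u j i rb = 0" by (simp add: Vr_def)
      show ?thesis using vl vj False by simp
    qed
  qed
  have int1: "integrable ?B (\<lambda>rb. Vr \<tau> mt u j i rb - Vr \<tau> mt u l i rb)"
  proof (rule B.integrable_const_bound[where B=1])
    show "AE x in ?B. norm (Vr \<tau> mt u j i x - Vr \<tau> mt u l i x) \<le> 1"
    proof (intro AE_I2)
      fix x
      show "norm (Vr \<tau> mt u j i x - Vr \<tau> mt u l i x) \<le> 1"
        using Vr_01[of \<tau> mt u j i x] Vr_01[of \<tau> mt u l i x] by auto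
    qed
  qed (intro borel_measurable_diff vm)
  have int2: "integrable ?B (\<lambda>rb. -1 + 2 * indicator S rb :: real)"
    using Sm by (intro Bochner_Integration.integrable_add integrable_mult_right integrable_real_indicator) (auto simp: B.emeasure_eq_measure)
  have "(\<integral>rb. Vr \<tau> mt u j i rb - Vr \<tau> mt u l i rb \<partial>?B) \<le> (\<integral>rb. -1 + 2 * indicator S rb \<partial>?B)"
    by (rule integral_mono_AE[OF int1 int2 AEb])
  also have "\<dots> = (\<integral>rb. -1 \<partial>?B) + (\<integral>rb. 2 * indicator S rb \<partial>?B)"
    using Sm by (intro Bochner_Integration.integral_add integrable_mult_right integrable_real_indicator) (auto simp: B.emeasure_eq_measure)
  also have "\<dots> = -1 + 2 * B.prob S"
    using Sm B.prob_space by simp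
  also have "B.prob S \<le> 2 * exp (- real i * (2 * \<tau>)\<^sup>2 / 2)"
    unfolding S_def by (rule row_hoeffding[OF mu_prob mu_sets mu_supp K i]) (use tau in simp)
  finally show ?thesis using True by (simp add: power2_eq_square algebra_simps)
qed

lemma integral_PiM_comp:
  fixes h :: "'b \<Rightarrow> real"
  assumes N: "\<And>i. i \<in> I \<Longrightarrow> prob_space (N i)" and k: "k \<in> I" and h: "h \<in> borel_measurable (N k)"
  shows "(\<integral>\<omega>. h (\<omega> k) \<partial>PiM I N) = (\<integral>x. h x \<partial>N k)"
proof -
  have "(\<integral>x. h x \<partial>N k) = (\<integral>x. h x \<partial>distr (PiM I N) (N k) (\<lambda>\<omega>. \<omega> k))"
    by (subst distr_PiM_component[OF N k]) simp_all
  also have "\<dots> = (\<integral>\<omega>. h (\<omega> k) \<partial>PiM I N)"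
    by (rule integral_distr[OF measurable_component_singleton[OF k, of N] h])
  finally show ?thesis by simp
qed

lemma C_int:
  fixes L :: "(nat \<times> nat) set"
  assumes jL: "(u, j) \<in> L" and lL: "(u, l) \<in> L" and q: "0 \<le> q" "q \<le> 1"
  shows "(\<integral>rc. Vtr \<tau> mt u j i rb rc - Vtr \<tau> mt u l i rb rc \<partial>PiM L (\<lambda>_. measure_pmf (bernoulli_pmf q)))
         = (2 * q - 1) * (Vr \<tau> mt u j i rb - Vr \<tau> mt u l i rb)"
proof -
  let ?C = "PiM L (\<lambda>_. measure_pmf (bernoulli_pmf q))"
  interpret C: prob_space ?C by (intro prob_space_PiM measure_pmf.prob_space_axioms)
  have one: "(\<integral>rc. Vtr \<tau> mt u k i rb rc \<partial>?C) = q * Vr \<tau> mt u k i rb + (1 - q) * (1 - Vr \<tau> mt u k i rb)"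
    if kL: "(u, k) \<in> L" for k
  proof -
    define h where "h b = (if b then Vr \<tau> mt u k i rb else 1 - Vr \<tau> mt u k i rb)" for b
    have "(\<integral>rc. Vtr \<tau> mt u k i rb rc \<partial>?C) = (\<integral>rc. h (rc (u, k)) \<partial>?C)"
      by (simp add: Vtr_def h_def)
    also have "\<dots> = (\<integral>x. h x \<partial>measure_pmf (bernoulli_pmf q))"
      by (rule integral_PiM_comp[OF measure_pmf.prob_space_axioms kL]) simp
    also have "\<dots> = q * Vr \<tau> mt u k i rb + (1 - q) * (1 - Vr \<tau> mt u k i rb)"
      using q by (simp add: h_def)
    finally show ?thesis .
  qed
  have intk: "integrable ?C (\<lambda>rc. Vtr \<tau> mt u k i rb rc)" if kL: "(u, k) \<in> L" for k
  proof (rule C.integrable_const_bound[where B=1])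
    show "AE x in ?C. norm (Vtr \<tau> mt u k i rb x) \<le> 1"
      using Vtr_bounds[of \<tau> mt u k i rb] by (auto intro!: AE_I2)
    have "(\<lambda>rc. (\<lambda>b. if b then Vr \<tau> mt u k i rb else 1 - Vr \<tau> mt u k i rb) (rc (u, k))) \<in> borel_measurable ?C"
      by (rule measurable_compose[OF measurable_component_singleton[OF kL]]) simp
    then show "(\<lambda>rc. Vtr \<tau> mt u k i rb rc) \<in> borel_measurable ?C" by (simp add: Vtr_def)
  qed
  have "(\<integral>rc. Vtr \<tau> mt u j i rb rc - Vtr \<tau> mt u l i rb rc \<partial>?C)
        = (\<integral>rc. Vtr \<tau> mt u j i rb rc \<partial>?C) - (\<integral>rc. Vtr \<tau> mt u l i rb rc \<partial>?C)"
    by (rule Bochner_Integration.integral_diff[OF intk[OF jL] intk[OF lL]])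
  also have "\<dots> = (2 * q - 1) * (Vr \<tau> mt u j i rb - Vr \<tau> mt u l i rb)"
    by (simp add: one[OF jL] one[OF lL] algebra_simps)
  finally show ?thesis .
qed

lemma Vtr_meas:
  fixes \<mu> :: "real measure" and K L :: "(nat \<times> nat) set" and u :: nat
  assumes mu_sets: "sets \<mu> = sets borel" and K: "\<And>t. (u, t) \<in> K" and kL: "(u, k) \<in> L"
  shows "(\<lambda>r. Vtr \<tau> mt u k i (fst r) (snd r)) \<in> borel_measurable
           (PiM K (\<lambda>_. \<mu>) \<Otimes>\<^sub>M PiM L (\<lambda>_. measure_pmf (bernoulli_pmf q)))"
proof -
  have [measurable]: "(\<lambda>rb. Vr \<tau> mt u k i rb) \<in> borel_measurable (PiM K (\<lambda>_. \<mu>))"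
    by (rule Vr_meas[OF mu_sets K])
  have [measurable]: "(\<lambda>rc. rc (u, k)) \<in> measurable (PiM L (\<lambda>_. measure_pmf (bernoulli_pmf q))) (count_space UNIV)"
    using measurable_component_singleton[OF kL, of "\<lambda>_. measure_pmf (bernoulli_pmf q)"] by simp
  show ?thesis unfolding Vtr_def by measurable
qed

lemma BC_int:
  fixes \<mu> :: "real measure" and K L :: "(nat \<times> nat) set" and u :: nat
  assumes mu_prob: "prob_space \<mu>" and mu_sets: "sets \<mu> = sets borel"
    and mu_supp: "measure \<mu> {-1..1} = 1" and K: "\<And>t. (u, t) \<in> K"
    and jL: "(u, j) \<in> L" and lL: "(u, l) \<in> L" and q: "1 / 2 \<le> q" "q \<le> 1"
    and tau: "\<tau> > 0" and l: "1 \<le> l" "l \<le> loc_J \<tau>" and th: "(\<integral>x. x \<partial>\<mu>) \<in> bin \<tau> l"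
    and jl: "\<bar>int j - int l\<bar> > 2" and mt: "mt \<ge> 1"
  shows "(\<integral>r. Vtr \<tau> mt u j i (fst r) (snd r) - Vtr \<tau> mt u l i (fst r) (snd r)
            \<partial>(PiM K (\<lambda>_. \<mu>) \<Otimes>\<^sub>M PiM L (\<lambda>_. measure_pmf (bernoulli_pmf q))))
         \<le> - (2 * q - 1) * (if mt \<le> i then 1 - 4 * exp (- 2 * real i * \<tau>\<^sup>2) else 0)"
proof -
  let ?B = "PiM K (\<lambda>_. \<mu>)"
  let ?C = "PiM L (\<lambda>_. measure_pmf (bernoulli_pmf q))"
  interpret B: prob_space ?B by (rule prob_space_PiM[OF mu_prob])
  interpret C: prob_space ?C by (intro prob_space_PiM measure_pmf.prob_space_axioms)
  interpret BC: pair_prob_space ?B ?C ..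
  have int: "integrable (?B \<Otimes>\<^sub>M ?C) (\<lambda>r. Vtr \<tau> mt u j i (fst r) (snd r) - Vtr \<tau> mt u l i (fst r) (snd r))"
  proof (rule BC.P.integrable_const_bound[where B=1])
    show "AE x in ?B \<Otimes>\<^sub>M ?C. norm (Vtr \<tau> mt u j i (fst x) (snd x) - Vtr \<tau> mt u l i (fst x) (snd x)) \<le> 1"
    proof (intro AE_I2)
      fix x
      show "norm (Vtr \<tau> mt u j i (fst x) (snd x) - Vtr \<tau> mt u l i (fst x) (snd x)) \<le> 1"
        using Vtr_bounds[of \<tau> mt u j i "fst x" "snd x"] Vtr_bounds[of \<tau> mt u l i "fst x" "snd x"] by auto
    qed
  qed (intro borel_measurable_diff Vtr_meas[OF mu_sets K jL] Vtr_meas[OF mu_sets K lL])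
  have "(\<integral>r. Vtr \<tau> mt u j i (fst r) (snd r) - Vtr \<tau> mt u l i (fst r) (snd r) \<partial>(?B \<Otimes>\<^sub>M ?C))
      = (\<integral>rb. (\<integral>rc. Vtr \<tau> mt u j i rb rc - Vtr \<tau> mt u l i rb rc \<partial>?C) \<partial>?B)"
    using BC.integral_fst'[OF int] by simp
  also have "\<dots> = (\<integral>rb. (2 * q - 1) * (Vr \<tau> mt u j i rb - Vr \<tau> mt u l i rb) \<partial>?B)"
    using q by (intro Bochner_Integration.integral_cong refl C_int[OF jL lL]) auto
  also have "\<dots> = (2 * q - 1) * (\<integral>rb. Vr \<tau> mt u j i rb - Vr \<tau> mt u l i rb \<partial>?B)"
    by simp
  also have "\<dots> \<le> (2 * q - 1) * (- (if mt \<le> i then 1 - 4 * exp (- 2 * real i * \<tau>\<^sup>2) else 0))"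
    using q by (intro mult_left_mono Vr_bound[OF mu_prob mu_sets mu_supp K tau l th jl mt]) auto
  finally show ?thesis by (simp only: mult_minus_left mult_minus_right)
qed

lemma BC_integrable:
  fixes \<mu> :: "real measure" and K L :: "(nat \<times> nat) set" and u :: nat
  assumes mu_prob: "prob_space \<mu>" and mu_sets: "sets \<mu> = sets borel" and K: "\<And>t. (u, t) \<in> K"
    and jL: "(u, j) \<in> L" and lL: "(u, l) \<in> L"
  shows "integrable (PiM K (\<lambda>_. \<mu>) \<Otimes>\<^sub>M PiM L (\<lambda>_. measure_pmf (bernoulli_pmf q)))
           (\<lambda>r. Vtr \<tau> mt u j i (fst r) (snd r) - Vtr \<tau> mt u l i (fst r) (snd r))"
proof -
  let ?B = "PiM K (\<lambda>_. \<mu>)"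
  let ?C = "PiM L (\<lambda>_. measure_pmf (bernoulli_pmf q))"
  interpret B: prob_space ?B by (rule prob_space_PiM[OF mu_prob])
  interpret C: prob_space ?C by (intro prob_space_PiM measure_pmf.prob_space_axioms)
  interpret BC: pair_prob_space ?B ?C ..
  show ?thesis
  proof (rule BC.P.integrable_const_bound[where B=1])
    show "AE x in ?B \<Otimes>\<^sub>M ?C. norm (Vtr \<tau> mt u j i (fst x) (snd x) - Vtr \<tau> mt u l i (fst x) (snd x)) \<le> 1"
    proof (intro AE_I2)
      fix x
      show "norm (Vtr \<tau> mt u j i (fst x) (snd x) - Vtr \<tau> mt u l i (fst x) (snd x)) \<le> 1"
        using Vtr_bounds[of \<tau> mt u j i "fst x" "snd x"] Vtr_bounds[of \<tau> mt u l i "fst x" "snd x"] by auto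
    qed
  qed (intro borel_measurable_diff Vtr_meas[OF mu_sets K jL] Vtr_meas[OF mu_sets K lL])
qed

definition Dfun :: "real \<Rightarrow> nat \<Rightarrow> nat \<Rightarrow> nat \<Rightarrow> nat \<Rightarrow> loc_omega \<Rightarrow> real" where
  "Dfun \<tau> mt j l u \<omega> = Vtr \<tau> mt u j (fst \<omega> u) (fst (snd \<omega>)) (snd (snd \<omega>))
                      - Vtr \<tau> mt u l (fst \<omega> u) (fst (snd \<omega>)) (snd (snd \<omega>))"

lemma Dfun_props:
  fixes \<mu> :: "real measure" and M :: "nat pmf"
  assumes mu_prob: "prob_space \<mu>" and mu_sets: "sets \<mu> = sets borel"
    and u: "u \<in> {1..n div 2}" and j: "j \<in> {1..J}" and l: "l \<in> {1..J}"
  shows "Dfun \<tau> mt j l u \<in> borel_measurable (loc_space M \<mu> n J q)"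
    "\<And>\<omega>. Dfun \<tau> mt j l u \<omega> \<in> {-1..1}"
proof -
  let ?A = "PiM {1..n div 2} (\<lambda>_. measure_pmf M)"
  let ?R = "PiM ({1..n div 2} \<times> UNIV) (\<lambda>_. \<mu>) \<Otimes>\<^sub>M PiM ({1..n div 2} \<times> {1..J}) (\<lambda>_. measure_pmf (bernoulli_pmf q))"
  have K: "\<And>t. (u, t) \<in> {1..n div 2} \<times> UNIV" using u by auto
  have jL: "(u, j) \<in> {1..n div 2} \<times> {1..J}" and lL: "(u, l) \<in> {1..n div 2} \<times> {1..J}" using u j l by auto
  have gm: "(\<lambda>\<omega>. (\<lambda>r. Vtr \<tau> mt u j i (fst r) (snd r) - Vtr \<tau> mt u l i (fst r) (snd r)) (snd \<omega>))
      \<in> borel_measurable (?A \<Otimes>\<^sub>M ?R)" for i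
    by (rule measurable_compose[OF measurable_snd])
       (intro borel_measurable_diff Vtr_meas[OF mu_sets K jL] Vtr_meas[OF mu_sets K lL])
  have im: "(\<lambda>\<omega>. fst \<omega> u) \<in> measurable (?A \<Otimes>\<^sub>M ?R) (count_space UNIV)"
    using measurable_compose[OF measurable_fst measurable_component_singleton[OF u, of "\<lambda>_. measure_pmf M"]]
    by simp
  have "(\<lambda>\<omega>. (\<lambda>i \<omega>. (\<lambda>r. Vtr \<tau> mt u j i (fst r) (snd r) - Vtr \<tau> mt u l i (fst r) (snd r)) (snd \<omega>)) (fst \<omega> u) \<omega>)
      \<in> borel_measurable (?A \<Otimes>\<^sub>M ?R)"
    by (rule measurable_compose_countable[OF gm im])
  then show "Dfun \<tau> mt j l u \<in> borel_measurable (loc_space M \<mu> n J q)"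
    by (simp add: loc_space_def Dfun_def[abs_def])
  show "Dfun \<tau> mt j l u \<omega> \<in> {-1..1}" for \<omega>
    using Vtr_bounds[of \<tau> mt u j "fst \<omega> u" "fst (snd \<omega>)" "snd (snd \<omega>)"]
          Vtr_bounds[of \<tau> mt u l "fst \<omega> u" "fst (snd \<omega>)" "snd (snd \<omega>)"]
    by (auto simp: Dfun_def)
qed

lemma P_int:
  fixes \<mu> :: "real measure" and M :: "nat pmf"
  assumes mu_prob: "prob_space \<mu>" and mu_sets: "sets \<mu> = sets borel"
    and mu_supp: "measure \<mu> {-1..1} = 1"
    and u: "u \<in> {1..n div 2}" and j: "j \<in> {1..J}" and l: "l \<in> {1..J}"
    and q: "1 / 2 \<le> q" "q \<le> 1"
    and tau: "\<tau> > 0" and lJ: "l \<le> loc_J \<tau>" and th: "(\<integral>x. x \<partial>\<mu>) \<in> bin \<tau> l"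
    and jl: "\<bar>int j - int l\<bar> > 2" and mt: "mt \<ge> 1"
    and e: "4 * exp (- 2 * real mt * \<tau>\<^sup>2) \<le> 1"
  shows "integral\<^sup>L (loc_space M \<mu> n J q) (Dfun \<tau> mt j l u)
          \<le> - (2 * q - 1) * (1 - 4 * exp (- 2 * real mt * \<tau>\<^sup>2)) * measure_pmf.prob M {i. mt \<le> i}"
proof -
  let ?A = "PiM {1..n div 2} (\<lambda>_. measure_pmf M)"
  let ?B = "PiM ({1..n div 2} \<times> UNIV) (\<lambda>_. \<mu>)"
  let ?C = "PiM ({1..n div 2} \<times> {1..J}) (\<lambda>_. measure_pmf (bernoulli_pmf q))"
  let ?R = "?B \<Otimes>\<^sub>M ?C"
  define c where "c = - (2 * q - 1) * (1 - 4 * exp (- 2 * real mt * \<tau>\<^sup>2))"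
  interpret A: prob_space ?A by (intro prob_space_PiM measure_pmf.prob_space_axioms)
  interpret B: prob_space ?B by (rule prob_space_PiM[OF mu_prob])
  interpret C: prob_space ?C by (intro prob_space_PiM measure_pmf.prob_space_axioms)
  interpret R: pair_prob_space ?B ?C ..
  interpret P: pair_prob_space ?A ?R ..
  have K: "\<And>t. (u, t) \<in> {1..n div 2} \<times> UNIV" using u by auto
  have jL: "(u, j) \<in> {1..n div 2} \<times> {1..J}" and lL: "(u, l) \<in> {1..n div 2} \<times> {1..J}" using u j l by auto
  have l1: "1 \<le> l" using l by simp
  define g where "g i r = Vtr \<tau> mt u j i (fst r) (snd r) - Vtr \<tau> mt u l i (fst r) (snd r)" for i r
  define G where "G i = (\<integral>r. g i r \<partial>?R)" for i
  have gint: "integrable ?R (g i)" for i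
    unfolding g_def by (rule BC_integrable[OF mu_prob mu_sets K jL lL])
  have gb: "g i r \<in> {-1..1}" for i r
    using Vtr_bounds[of \<tau> mt u j i "fst r" "snd r"] Vtr_bounds[of \<tau> mt u l i "fst r" "snd r"]
    by (auto simp: g_def)
  have Gb: "norm (G i) \<le> 1" for i
  proof -
    have "G i \<le> 1" unfolding G_def by (rule R.P.integral_le_const[OF gint]) (use gb in auto)
    moreover have "-1 \<le> G i" unfolding G_def by (rule R.P.integral_ge_const[OF gint]) (use gb in auto)
    ultimately show ?thesis by simp
  qed
  have Gle: "G i \<le> c * indicator {i. mt \<le> i} i" for i
  proof -
    have "G i \<le> - (2 * q - 1) * (if mt \<le> i then 1 - 4 * exp (- 2 * real i * \<tau>\<^sup>2) else 0)"
      unfolding G_def g_def by (rule BC_int[OF mu_prob mu_sets mu_supp K jL lL q tau l1 lJ th jl mt])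
    also have "\<dots> \<le> c * indicator {i. mt \<le> i} i"
    proof (cases "mt \<le> i")
      case True
      have "real mt * \<tau>\<^sup>2 \<le> real i * \<tau>\<^sup>2" using True by (intro mult_right_mono) auto
      then have "exp (- 2 * real i * \<tau>\<^sup>2) \<le> exp (- 2 * real mt * \<tau>\<^sup>2)" by simp
      then have "1 - 4 * exp (- 2 * real mt * \<tau>\<^sup>2) \<le> 1 - 4 * exp (- 2 * real i * \<tau>\<^sup>2)" by simp
      then have "(2 * q - 1) * (1 - 4 * exp (- 2 * real mt * \<tau>\<^sup>2)) \<le> (2 * q - 1) * (1 - 4 * exp (- 2 * real i * \<tau>\<^sup>2))"
        using q by (intro mult_left_mono) auto
      then have "- (2 * q - 1) * (1 - 4 * exp (- 2 * real i * \<tau>\<^sup>2)) \<le> c" unfolding c_def by linarith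
      then show ?thesis using True by simp
    next
      case False
      then show ?thesis by (simp add: c_def)
    qed
    finally show ?thesis .
  qed
  have Dint: "integrable (?A \<Otimes>\<^sub>M ?R) (Dfun \<tau> mt j l u)"
  proof (rule P.P.integrable_const_bound[where B=1])
    show "AE x in ?A \<Otimes>\<^sub>M ?R. norm (Dfun \<tau> mt j l u x) \<le> 1"
    proof (intro AE_I2)
      fix x show "norm (Dfun \<tau> mt j l u x) \<le> 1"
        using Dfun_props(2)[OF mu_prob mu_sets u j l, of \<tau> mt x] by auto
    qed
    show "Dfun \<tau> mt j l u \<in> borel_measurable (?A \<Otimes>\<^sub>M ?R)"
      using Dfun_props(1)[OF mu_prob mu_sets u j l] by (simp add: loc_space_def)
  qed
  have "integral\<^sup>L (loc_space M \<mu> n J q) (Dfun \<tau> mt j l u) = integral\<^sup>L (?A \<Otimes>\<^sub>M ?R) (Dfun \<tau> mt j l u)"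
    by (simp add: loc_space_def)
  also have "\<dots> = (\<integral>a. (\<integral>r. Dfun \<tau> mt j l u (a, r) \<partial>?R) \<partial>?A)"
    by (rule P.integral_fst'[OF Dint, symmetric])
  also have "\<dots> = (\<integral>a. G (a u) \<partial>?A)"
    by (simp add: G_def g_def Dfun_def)
  also have "\<dots> = (\<integral>i. G i \<partial>measure_pmf M)"
    by (rule integral_PiM_comp[OF measure_pmf.prob_space_axioms u]) simp
  also have "\<dots> \<le> (\<integral>i. c * indicator {i. mt \<le> i} i \<partial>measure_pmf M)"
  proof (rule integral_mono)
    show "integrable (measure_pmf M) G"
      by (rule measure_pmf.integrable_const_bound[where B=1]) (use Gb in \<open>auto intro!: AE_I2\<close>)
    show "integrable (measure_pmf M) (\<lambda>i. c * indicator {i. mt \<le> i} i)"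
      by (intro integrable_mult_right integrable_real_indicator) (auto simp: measure_pmf.emeasure_eq_measure)
  qed (rule Gle)
  also have "\<dots> = c * measure_pmf.prob M {i. mt \<le> i}"
    by simp
  finally show ?thesis by (simp add: c_def)
qed

lemma Vtr_restrict:
  assumes "j \<in> {1..J}"
  shows "Vtr \<tau> mt u j i (restrict rb ({u} \<times> UNIV)) (restrict rc ({u} \<times> {1..J})) = Vtr \<tau> mt u j i rb rc"
  using assms by (simp add: Vtr_def Vr_def xb_def)

lemma Dfun_indep:
  fixes \<mu> :: "real measure" and M :: "nat pmf"
  assumes mu_prob: "prob_space \<mu>" and mu_sets: "sets \<mu> = sets borel"
    and j: "j \<in> {1..J}" and l: "l \<in> {1..J}"
  shows "prob_space.indep_vars (loc_space M \<mu> n J q) (\<lambda>_. borel) (\<lambda>u. Dfun \<tau> mt j l u) {1..n div 2}"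
proof -
  define U where "U = {1..n div 2}"
  let ?A = "PiM U (\<lambda>_. measure_pmf M)"
  let ?B = "PiM (U \<times> UNIV) (\<lambda>_. \<mu>)"
  let ?C = "PiM (U \<times> {1..J}) (\<lambda>_. measure_pmf (bernoulli_pmf q))"
  let ?R = "?B \<Otimes>\<^sub>M ?C"
  have pA: "prob_space ?A" by (intro prob_space_PiM measure_pmf.prob_space_axioms)
  have pB: "prob_space ?B" by (rule prob_space_PiM[OF mu_prob])
  have pC: "prob_space ?C" by (intro prob_space_PiM measure_pmf.prob_space_axioms)
  interpret A: prob_space ?A by fact
  interpret B: prob_space ?B by fact
  interpret C: prob_space ?C by fact
  interpret R: pair_prob_space ?B ?C ..
  have pR: "prob_space ?R" by (rule R.P.prob_space_axioms)
  have fin: "finite U" by (simp add: U_def)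
  have IA: "A.indep_vars (\<lambda>_. measure_pmf M) (\<lambda>u a. a u) U"
    using indep_vars_PiM_coords[of U "\<lambda>_. measure_pmf M" "\<lambda>x. x" U]
    by (simp add: measure_pmf.prob_space_axioms)
  have IB0: "B.indep_vars (\<lambda>_. \<mu>) (\<lambda>k rb. rb k) (U \<times> UNIV)"
    using indep_vars_PiM_coords[of "U \<times> UNIV" "\<lambda>_. \<mu>" "\<lambda>x. x" "U \<times> UNIV"] mu_prob by simp
  have IB: "B.indep_vars (\<lambda>u. PiM ({u} \<times> UNIV) (\<lambda>_. \<mu>)) (\<lambda>u rb. restrict rb ({u} \<times> UNIV)) U"
    by (rule B.indep_vars_restrict[OF IB0]) (auto simp: disjoint_family_on_def)
  have IC0: "C.indep_vars (\<lambda>_. measure_pmf (bernoulli_pmf q)) (\<lambda>k rc. rc k) (U \<times> {1..J})"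
    using indep_vars_PiM_coords[of "U \<times> {1..J}" "\<lambda>_. measure_pmf (bernoulli_pmf q)" "\<lambda>x. x" "U \<times> {1..J}"]
    by (simp add: measure_pmf.prob_space_axioms)
  have IC: "C.indep_vars (\<lambda>u. PiM ({u} \<times> {1..J}) (\<lambda>_. measure_pmf (bernoulli_pmf q))) (\<lambda>u rc. restrict rc ({u} \<times> {1..J})) U"
    by (rule C.indep_vars_restrict[OF IC0]) (auto simp: disjoint_family_on_def)
  have IR: "prob_space.indep_vars ?R
      (\<lambda>u. PiM ({u} \<times> UNIV) (\<lambda>_. \<mu>) \<Otimes>\<^sub>M PiM ({u} \<times> {1..J}) (\<lambda>_. measure_pmf (bernoulli_pmf q)))
      (\<lambda>u r. (restrict (fst r) ({u} \<times> UNIV), restrict (snd r) ({u} \<times> {1..J}))) U"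
    by (rule indep_vars_pair[OF pB pC fin IB IC])
  have IP: "prob_space.indep_vars (?A \<Otimes>\<^sub>M ?R)
      (\<lambda>u. measure_pmf M \<Otimes>\<^sub>M (PiM ({u} \<times> UNIV) (\<lambda>_. \<mu>) \<Otimes>\<^sub>M PiM ({u} \<times> {1..J}) (\<lambda>_. measure_pmf (bernoulli_pmf q))))
      (\<lambda>u \<omega>. (fst \<omega> u, (restrict (fst (snd \<omega>)) ({u} \<times> UNIV), restrict (snd (snd \<omega>)) ({u} \<times> {1..J})))) U"
    using indep_vars_pair[OF pA pR fin IA IR] by simp
  define g where "g u x = Vtr \<tau> mt u j (fst x) (fst (snd x)) (snd (snd x)) - Vtr \<tau> mt u l (fst x) (fst (snd x)) (snd (snd x))"
    for u and x :: "nat \<times> (nat \<times> nat \<Rightarrow> real) \<times> (nat \<times> nat \<Rightarrow> bool)"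
  have gm: "g u \<in> borel_measurable (measure_pmf M \<Otimes>\<^sub>M (PiM ({u} \<times> UNIV) (\<lambda>_. \<mu>) \<Otimes>\<^sub>M PiM ({u} \<times> {1..J}) (\<lambda>_. measure_pmf (bernoulli_pmf q))))"
    for u
  proof -
    let ?N = "measure_pmf M \<Otimes>\<^sub>M (PiM ({u} \<times> UNIV) (\<lambda>_. \<mu>) \<Otimes>\<^sub>M PiM ({u} \<times> {1..J}) (\<lambda>_. measure_pmf (bernoulli_pmf q)))"
    have K: "\<And>t. (u, t) \<in> {u} \<times> UNIV" by simp
    have jL: "(u, j) \<in> {u} \<times> {1..J}" and lL: "(u, l) \<in> {u} \<times> {1..J}" using j l by auto
    have gi: "(\<lambda>x. (\<lambda>r. Vtr \<tau> mt u j i (fst r) (snd r) - Vtr \<tau> mt u l i (fst r) (snd r)) (snd x)) \<in> borel_measurable ?N" for i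
      by (rule measurable_compose[OF measurable_snd])
         (intro borel_measurable_diff Vtr_meas[OF mu_sets K jL] Vtr_meas[OF mu_sets K lL])
    have im: "fst \<in> measurable ?N (count_space UNIV)"
      using measurable_fst[of "measure_pmf M"] by simp
    have "(\<lambda>x. (\<lambda>i x. (\<lambda>r. Vtr \<tau> mt u j i (fst r) (snd r) - Vtr \<tau> mt u l i (fst r) (snd r)) (snd x)) (fst x) x) \<in> borel_measurable ?N"
      by (rule measurable_compose_countable[OF gi im])
    then show ?thesis by (simp add: g_def[abs_def])
  qed
  interpret P: prob_space "?A \<Otimes>\<^sub>M ?R" by (rule prob_space_pair[OF pA pR])
  have "P.indep_vars (\<lambda>_. borel)
      (\<lambda>u \<omega>. g u (fst \<omega> u, (restrict (fst (snd \<omega>)) ({u} \<times> UNIV), restrict (snd (snd \<omega>)) ({u} \<times> {1..J})))) U"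
    by (rule P.indep_vars_compose2[OF IP gm])
  then have "P.indep_vars (\<lambda>_. borel) (\<lambda>u. Dfun \<tau> mt j l u) U"
    by (rule P.indep_vars_cong[THEN iffD1, rotated 3])
       (simp_all only: g_def Dfun_def[abs_def] fst_conv snd_conv Vtr_restrict[OF j] Vtr_restrict[OF l] refl)
  then show ?thesis by (simp add: loc_space_def U_def)
qed

lemma prob_space_loc:
  assumes mu_prob: "prob_space \<mu>"
  shows "prob_space (loc_space M \<mu> n J q)"
  unfolding loc_space_def
  by (intro prob_space_pair prob_space_PiM measure_pmf.prob_space_axioms mu_prob)

lemma prob_bad_j:
  fixes \<mu> :: "real measure" and M :: "nat pmf"
  assumes mu_prob: "prob_space \<mu>" and mu_sets: "sets \<mu> = sets borel"
    and mu_supp: "measure \<mu> {-1..1} = 1"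
    and n_pos: "n > 0" and n_even: "even n"
    and j: "j \<in> {1..J}" and l: "l \<in> {1..J}"
    and q: "1 / 2 \<le> q" "q \<le> 1"
    and tau: "\<tau> > 0" and lJ: "l \<le> loc_J \<tau>" and th: "(\<integral>x. x \<partial>\<mu>) \<in> bin \<tau> l"
    and jl: "\<bar>int j - int l\<bar> > 2" and mt: "mt \<ge> 1"
    and e: "4 * exp (- 2 * real mt * \<tau>\<^sup>2) \<le> 1"
  shows "measure (loc_space M \<mu> n J q) {\<omega> \<in> space (loc_space M \<mu> n J q). score \<tau> mt n \<omega> l \<le> score \<tau> mt n \<omega> j}
    \<le> exp (- real n * ((2 * q - 1) * (1 - 4 * exp (- 2 * real mt * \<tau>\<^sup>2)) * measure_pmf.prob M {i. mt \<le> i})\<^sup>2 / 4)"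
proof -
  let ?P = "loc_space M \<mu> n J q"
  define U where "U = {1..n div 2}"
  define N where "N = n div 2"
  define \<delta> where "\<delta> = (2 * q - 1) * (1 - 4 * exp (- 2 * real mt * \<tau>\<^sup>2)) * measure_pmf.prob M {i. mt \<le> i}"
  define ms where "ms = (\<Sum>u\<in>U. integral\<^sup>L ?P (Dfun \<tau> mt j l u))"
  have rN: "real N = real n / 2" using n_even by (auto simp: N_def elim!: evenE)
  have N1: "N \<ge> 1" using n_pos n_even by (auto simp: N_def elim!: evenE)
  have cardU: "card U = N" by (simp add: U_def N_def)
  have d0: "\<delta> \<ge> 0" using q e by (simp add: \<delta>_def)
  interpret P: prob_space ?P by (rule prob_space_loc[OF mu_prob])
  interpret H: Hoeffding_ineq ?P U "\<lambda>u. Dfun \<tau> mt j l u" "\<lambda>_. -1" "\<lambda>_. 1" ms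
  proof unfold_locales
    show "finite U" by (simp add: U_def)
    show "P.indep_vars (\<lambda>_. borel) (\<lambda>u. Dfun \<tau> mt j l u) U"
      unfolding U_def by (rule Dfun_indep[OF mu_prob mu_sets j l])
    show "AE x in ?P. Dfun \<tau> mt j l u x \<in> {- 1..1}" if "u \<in> U" for u
      using Dfun_props(2)[OF mu_prob mu_sets _ j l, of u] that by (auto simp: U_def intro!: AE_I2)
  qed (simp add: ms_def)
  have each: "integral\<^sup>L ?P (Dfun \<tau> mt j l u) \<le> - \<delta>" if "u \<in> U" for u
  proof -
    have "integral\<^sup>L ?P (Dfun \<tau> mt j l u) \<le> - (2 * q - 1) * (1 - 4 * exp (- 2 * real mt * \<tau>\<^sup>2)) * measure_pmf.prob M {i. mt \<le> i}"
      by (rule P_int[OF mu_prob mu_sets mu_supp _ j l q tau lJ th jl mt e]) (use that in \<open>simp add: U_def\<close>)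
    also have "\<dots> = - \<delta>" by (simp only: \<delta>_def mult_minus_left)
    finally show ?thesis .
  qed
  have "ms \<le> (\<Sum>u\<in>U. - \<delta>)"
    unfolding ms_def by (intro sum_mono each)
  then have ms: "ms \<le> - real N * \<delta>" by (simp add: cardU)
  define \<epsilon> where "\<epsilon> = - ms"
  have eps: "\<epsilon> \<ge> real N * \<delta>" using ms by (simp add: \<epsilon>_def)
  have eps0: "\<epsilon> \<ge> 0" using eps d0 by (simp add: order_trans[OF _ eps])
  have sc: "score \<tau> mt n \<omega> j - score \<tau> mt n \<omega> l = (\<Sum>u\<in>U. Dfun \<tau> mt j l u \<omega>)" for \<omega>
    by (simp add: score_def U_def Dfun_def Vt_eq sum_subtractf)
  have "{\<omega> \<in> space ?P. score \<tau> mt n \<omega> l \<le> score \<tau> mt n \<omega> j} = {\<omega> \<in> space ?P. (\<Sum>u\<in>U. Dfun \<tau> mt j l u \<omega>) \<ge> ms + \<epsilon>}"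
  proof -
    have "score \<tau> mt n \<omega> l \<le> score \<tau> mt n \<omega> j \<longleftrightarrow> (\<Sum>u\<in>U. Dfun \<tau> mt j l u \<omega>) \<ge> ms + \<epsilon>" for \<omega>
      using sc[of \<omega>] by (simp add: \<epsilon>_def) linarith
    then show ?thesis by simp
  qed
  moreover have pos: "(\<Sum>u\<in>U. ((1::real) - - 1)\<^sup>2) > 0" using N1 cardU by simp
  ultimately have "P.prob {\<omega> \<in> space ?P. score \<tau> mt n \<omega> l \<le> score \<tau> mt n \<omega> j}
      \<le> exp (- 2 * \<epsilon>\<^sup>2 / (\<Sum>u\<in>U. ((1::real) - - 1)\<^sup>2))"
    using H.Hoeffding_ineq_ge[OF eps0 pos] by simp
  also have "(\<Sum>u\<in>U. ((1::real) - - 1)\<^sup>2) = 4 * real N" by (simp add: cardU)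
  also have "- 2 * \<epsilon>\<^sup>2 / (4 * real N) \<le> - real n * \<delta>\<^sup>2 / 4"
  proof -
    have "(real N * \<delta>)\<^sup>2 \<le> \<epsilon>\<^sup>2" using eps d0 by (intro power_mono) auto
    then have "2 * (real N * \<delta>)\<^sup>2 / (4 * real N) \<le> 2 * \<epsilon>\<^sup>2 / (4 * real N)"
      using N1 by (intro divide_right_mono) auto
    moreover have "2 * (real N * \<delta>)\<^sup>2 / (4 * real N) = real n * \<delta>\<^sup>2 / 4"
      using N1 rN by (simp add: power2_eq_square field_simps)
    ultimately show ?thesis by simp
  qed
  finally show ?thesis by (simp add: \<delta>_def)
qed

lemma card_far:
  assumes l: "1 \<le> l" "l \<le> J"
  shows "card {j \<in> {1..J}. \<bar>int j - int l\<bar> > 2} \<le> J - 3"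
proof -
  have "{j \<in> {1..J}. \<bar>int j - int l\<bar> > 2} \<subseteq> {1..l - 3} \<union> {l + 3..J}" by auto
  then have "card {j \<in> {1..J}. \<bar>int j - int l\<bar> > 2} \<le> card ({1..l - 3} \<union> {l + 3..J})"
    by (intro card_mono) auto
  also have "\<dots> \<le> card {1..l - 3} + card {l + 3..J}" by (rule card_Un_le)
  also have "\<dots> = (l - 3) + (J + 1 - (l + 3))" by simp
  also have "\<dots> \<le> J - 3" using l by arith
  finally show ?thesis .
qed

theorem lemmaS5:
  fixes n mt l :: nat and \<alpha> \<theta> :: real and M :: "nat pmf" and \<mu> :: "real measure"
    and jhat :: "loc_omega \<Rightarrow> nat"
  defines "\<tau> \<equiv> loc_tau mt n \<alpha>"
  defines "J \<equiv> loc_J \<tau>"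
  defines "P \<equiv> loc_space M \<mu> n J (rr_prob \<alpha>)"
  assumes n_pos: "n > 0" and n_even: "even n"
    and alpha: "0 < \<alpha>" "\<alpha> \<le> 22 / 35"
    and M_supp: "0 \<notin> set_pmf M"
    and mu_prob: "prob_space \<mu>" and mu_sets: "sets \<mu> = sets borel"
    and mu_supp: "measure \<mu> {-1..1} = 1"
    and theta: "\<theta> = (\<integral>x. x \<partial>\<mu>)"
    and mt_pos: "mt \<ge> 1"
    and l: "l \<in> {1..J}" "\<theta> \<in> bin \<tau> l"
    and jhat_meas: "jhat \<in> measurable P (count_space UNIV)"
    and jhat_max: "\<And>\<omega>. jhat \<omega> \<in> {1..J} \<and>
                     (\<forall>j \<in> {1..J}. score \<tau> mt n \<omega> j \<le> score \<tau> mt n \<omega> (jhat \<omega>))"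
  shows "measure P {\<omega> \<in> space P. \<bar>int (jhat \<omega>) - int l\<bar> > 2}
           \<le> (1 / \<tau>) * exp (- (real n * \<alpha>\<^sup>2 *
                 (measure_pmf.prob M {i. i \<ge> mt})\<^sup>2 / 579))"
proof -
  define q where "q = rr_prob \<alpha>"
  define p where "p = measure_pmf.prob M {i. i \<ge> mt}"
  define e0 where "e0 = exp (- 2 * real mt * \<tau>\<^sup>2)"
  define \<beta> where "\<beta> = exp (- (real n * \<alpha>\<^sup>2 * p\<^sup>2 / 579))"
  define S where "S = {j \<in> {1..J}. \<bar>int j - int l\<bar> > 2}"
  have tau: "\<tau> > 0" using tau_facts(1)[OF mt_pos] by (simp add: \<tau>_def)
  have e0b: "e0 \<le> 1 / 4096" using tau_facts(2)[OF mt_pos] by (simp add: e0_def \<tau>_def)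
  have e: "4 * exp (- 2 * real mt * \<tau>\<^sup>2) \<le> 1" using e0b by (simp add: e0_def)
  note qf = rr_facts[OF alpha, folded q_def]
  have q: "1 / 2 \<le> q" "q \<le> 1" using qf by auto
  have l1: "1 \<le> l" and lJ: "l \<le> loc_J \<tau>" using l(1) by (auto simp: J_def)
  have th: "(\<integral>x. x \<partial>\<mu>) \<in> bin \<tau> l" using l(2) theta by simp
  have p0: "p \<ge> 0" by (simp add: p_def)
  have Pdef: "P = loc_space M \<mu> n J q" by (simp add: P_def q_def)
  interpret P: prob_space P unfolding Pdef by (rule prob_space_loc[OF mu_prob])
  have each: "P.prob {\<omega> \<in> space P. score \<tau> mt n \<omega> l \<le> score \<tau> mt n \<omega> j} \<le> \<beta>" if j: "j \<in> S" for j
  proof -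
    have jJ: "j \<in> {1..J}" and jl: "\<bar>int j - int l\<bar> > 2" using j by (auto simp: S_def)
    define \<delta> where "\<delta> = (2 * q - 1) * (1 - 4 * e0) * p"
    have "P.prob {\<omega> \<in> space P. score \<tau> mt n \<omega> l \<le> score \<tau> mt n \<omega> j} \<le> exp (- real n * \<delta>\<^sup>2 / 4)"
      unfolding Pdef \<delta>_def e0_def p_def
      by (rule prob_bad_j[OF mu_prob mu_sets mu_supp n_pos n_even jJ l(1) q tau lJ th jl mt_pos e])
    also have "\<dots> \<le> \<beta>"
    proof -
      define c :: real where "c = (1000 / 12018) * (1023 / 1024)"
      have "(1000 * \<alpha> / 12018) * (1023 / 1024) \<le> (2 * q - 1) * (1 - 4 * e0)"
        using qf(3) e0b alpha by (intro mult_mono) auto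
      then have "(1000 * \<alpha> / 12018) * (1023 / 1024) * p \<le> \<delta>"
        unfolding \<delta>_def using p0 by (intro mult_right_mono) auto
      then have d: "c * \<alpha> * p \<le> \<delta>" by (simp add: c_def)
      have "0 \<le> c * \<alpha> * p" using alpha p0 by (simp add: c_def)
      then have "(c * \<alpha> * p)\<^sup>2 \<le> \<delta>\<^sup>2" using d by (intro power_mono) auto
      then have "real n * (c * \<alpha> * p)\<^sup>2 \<le> real n * \<delta>\<^sup>2" by (intro mult_left_mono) auto
      moreover have "real n * \<alpha>\<^sup>2 * p\<^sup>2 / 579 \<le> real n * (c * \<alpha> * p)\<^sup>2 / 4"
      proof -
        have "0 \<le> real n * \<alpha>\<^sup>2 * p\<^sup>2" by simp
        then have "real n * \<alpha>\<^sup>2 * p\<^sup>2 * (1 / 579) \<le> real n * \<alpha>\<^sup>2 * p\<^sup>2 * (c\<^sup>2 / 4)"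
          by (intro mult_left_mono) (auto simp: c_def power2_eq_square)
        then show ?thesis by (simp add: power_mult_distrib field_simps)
      qed
      ultimately have "- real n * \<delta>\<^sup>2 / 4 \<le> - (real n * \<alpha>\<^sup>2 * p\<^sup>2 / 579)" by simp
      then show ?thesis unfolding \<beta>_def by simp
    qed
    finally show ?thesis .
  qed
  have meas: "{\<omega> \<in> space P. score \<tau> mt n \<omega> l \<le> score \<tau> mt n \<omega> j} \<in> P.events" if j: "j \<in> S" for j
  proof -
    have jJ: "j \<in> {1..J}" using j by (auto simp: S_def)
    have sc: "score \<tau> mt n \<omega> j - score \<tau> mt n \<omega> l = (\<Sum>u\<in>{1..n div 2}. Dfun \<tau> mt j l u \<omega>)" for \<omega>
      by (simp add: score_def Dfun_def Vt_eq sum_subtractf)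
    have "{\<omega> \<in> space P. score \<tau> mt n \<omega> l \<le> score \<tau> mt n \<omega> j} = {\<omega> \<in> space P. 0 \<le> (\<Sum>u\<in>{1..n div 2}. Dfun \<tau> mt j l u \<omega>)}"
    proof -
      have "score \<tau> mt n \<omega> l \<le> score \<tau> mt n \<omega> j \<longleftrightarrow> 0 \<le> (\<Sum>u\<in>{1..n div 2}. Dfun \<tau> mt j l u \<omega>)" for \<omega>
        using sc[of \<omega>] by linarith
      then show ?thesis by simp
    qed
    also have "\<dots> \<in> P.events"
    proof -
      have "(\<lambda>\<omega>. \<Sum>u\<in>{1..n div 2}. Dfun \<tau> mt j l u \<omega>) \<in> borel_measurable P"
        unfolding Pdef by (intro borel_measurable_sum Dfun_props(1)[OF mu_prob mu_sets _ jJ l(1)]) auto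
      then show ?thesis by measurable
    qed
    finally show ?thesis .
  qed
  have sub: "{\<omega> \<in> space P. \<bar>int (jhat \<omega>) - int l\<bar> > 2} \<subseteq> (\<Union>j\<in>S. {\<omega> \<in> space P. score \<tau> mt n \<omega> l \<le> score \<tau> mt n \<omega> j})"
  proof
    fix \<omega> assume w: "\<omega> \<in> {\<omega> \<in> space P. \<bar>int (jhat \<omega>) - int l\<bar> > 2}"
    have "jhat \<omega> \<in> S" using w jhat_max[of \<omega>] by (auto simp: S_def)
    moreover have "score \<tau> mt n \<omega> l \<le> score \<tau> mt n \<omega> (jhat \<omega>)" using jhat_max[of \<omega>] l(1) by auto
    ultimately show "\<omega> \<in> (\<Union>j\<in>S. {\<omega> \<in> space P. score \<tau> mt n \<omega> l \<le> score \<tau> mt n \<omega> j})" using w by auto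
  qed
  have finS: "finite S" by (simp add: S_def)
  have "P.prob {\<omega> \<in> space P. \<bar>int (jhat \<omega>) - int l\<bar> > 2}
      \<le> P.prob (\<Union>j\<in>S. {\<omega> \<in> space P. score \<tau> mt n \<omega> l \<le> score \<tau> mt n \<omega> j})"
    using sub meas finS by (intro P.finite_measure_mono) auto
  also have "\<dots> \<le> (\<Sum>j\<in>S. P.prob {\<omega> \<in> space P. score \<tau> mt n \<omega> l \<le> score \<tau> mt n \<omega> j})"
    using meas finS by (intro P.finite_measure_subadditive_finite) auto
  also have "\<dots> \<le> (\<Sum>j\<in>S. \<beta>)" by (intro sum_mono each)
  also have "\<dots> = real (card S) * \<beta>" by simp
  also have "\<dots> \<le> (1 / \<tau>) * \<beta>"
  proof (rule mult_right_mono)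
    have cS: "card S \<le> J - 3" unfolding S_def using l(1) by (intro card_far) auto
    have "real J < 1 / \<tau> + 1" using J_props(2)[OF tau] by (simp add: J_def)
    moreover have "0 < 1 / \<tau>" using tau by simp
    ultimately have "real (J - 3) \<le> 1 / \<tau>" by (cases "J \<ge> 3") (auto simp: of_nat_diff)
    then show "real (card S) \<le> 1 / \<tau>" using cS by (meson of_nat_le_iff order_trans)
  qed (simp add: \<beta>_def)
  finally show ?thesis by (simp add: \<beta>_def p_def)
qed

end
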